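(* Let $S$ be a tree and define $P_S:\mathbb N\to\mathbb N$ by $P_S(n)=sh(S,L_n)$. Then there is a polynomial with rational coefficients, of degree $|S|$ and leading coefficient $(S!)^{-1}$, whose value at every $n\in\mathbb N$ equals $P_S(n)$. Here $|S|$ is the number of vertices of $S$ and $$S!=\prod_{v\in V(S)}|S_v|,$$ where $S_v$ is the maximal subtree of $S$ having $v$ as its root vertex and $|S_v|$ its number of vertices.
   Context: A tree is a finite connected graph without cycles whose external edges are open. One external edge is the root; the others are leaves. Each vertex has one outgoing edge (towards the root) and a strictly positive number of incoming edges. No planar structure. $V(S)$ is the vertex set. For a vertex $v$, $S_v$ consists of the outgoing edge of $v$ together with all edges above it. $L_n$ denotes the linear tree with $n$ vertices, all of valence $1$ ($L_0=\eta$, the tree with one edge and no vertices). Shuffle: for trees $S,T$ with root edges $r_S,r_T$, a shuffle is a tree $A$ with edges labelled by pairs $(s,t)\in E(S)\times E(T)$ such that: (1) the root of $A$ is labelled $(r_S,r_T)$; (2) the labelling restricts to a bijection from leaves of $A$ onto $\mathrm{Leaves}(S)\times\mathrm{Leaves}(T)$; (3) if an edge labelled $(s,t)$ is not a leaf, the incoming edges of the vertex of $A$ above it are labelled either exactly $(s_1,t),\dots,(s_m,t)$ for $s_1,\dots,s_m$ the edges immediately above $s$ in $S$, or exactly $(s,t_1),\dots,(s,t_n)$ for $t_1,\dots,t_n$ the edges immediately above $t$ in $T$. Shuffles are taken up to isomorphism of labelled trees; $sh(S,T)$ is their number. *)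

theory Defs
  imports "HOL-Library.Multiset" "HOL-Computational_Algebra.Polynomial"
begin

text \<open>A (non-planar) tree is given by a planar representative: every node of the
  datatype below is an EDGE; its list of children are the edges immediately above it
  (the incoming edges of the vertex on top of it).  An edge with no children is a leaf,
  an edge with a nonempty list of children is the outgoing edge of a vertex.  The root
  edge is the top node.  Edges are addressed by paths (nat lists), the root being [].\<close>

datatype ptree = Nd "ptree list"

fun children :: "ptree \<Rightarrow> ptree list" where
  "children (Nd ts) = ts"

function subtr :: "ptree \<Rightarrow> nat list \<Rightarrow> ptree" where
  "subtr t [] = t"
| "subtr (Nd ts) (i # p) = subtr (ts ! i) p"
  by pat_completeness auto
termination by (relation "measure (\<lambda>(t, p). length p)") auto

fun valid :: "ptree \<Rightarrow> nat list \<Rightarrow> bool" where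
  "valid t [] = True"
| "valid (Nd ts) (i # p) = (i < length ts \<and> valid (ts ! i) p)"

definition edges :: "ptree \<Rightarrow> nat list set" where
  "edges S = {p. valid S p}"

definition above :: "ptree \<Rightarrow> nat list \<Rightarrow> nat list list" where
  "above S p = map (\<lambda>i. p @ [i]) [0..<length (children (subtr S p))]"

definition leaves :: "ptree \<Rightarrow> nat list set" where
  "leaves S = {p \<in> edges S. children (subtr S p) = []}"

fun nverts :: "ptree \<Rightarrow> nat" where
  "nverts (Nd ts) = (if ts = [] then 0 else 1 + sum_list (map nverts ts))"

fun tfact :: "ptree \<Rightarrow> nat" where
  "tfact (Nd ts) = (if ts = [] then 1 else nverts (Nd ts) * prod_list (map tfact ts))"

fun lin :: "nat \<Rightarrow> ptree" where
  "lin 0 = Nd []"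
| "lin (Suc n) = Nd [lin n]"

text \<open>Edge-labelled non-planar trees (isomorphism classes): each node is an edge with
  its label and the multiset of edges immediately above it.\<close>
datatype 'a ltree = LN 'a "'a ltree multiset"

lemma size_mset_mem [termination_simp]:
  "z \<in># M \<Longrightarrow> size z < Suc (size_multiset size M)"
proof -
  assume "z \<in># M"
  then obtain N where "M = add_mset z N" by (blast dest: multi_member_split)
  then show ?thesis by simp
qed

fun lab :: "'a ltree \<Rightarrow> 'a" where
  "lab (LN a M) = a"

fun leaf_labels :: "'a ltree \<Rightarrow> 'a multiset" where
  "leaf_labels (LN a M) = (if M = {#} then {#a#} else sum_mset (image_mset leaf_labels M))"

fun shuf_ok :: "ptree \<Rightarrow> ptree \<Rightarrow> (nat list \<times> nat list) ltree \<Rightarrow> bool" where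
  "shuf_ok S T (LN (s, t) M) =
     ((M = {#} \<or>
       image_mset lab M = mset (map (\<lambda>s'. (s', t)) (above S s)) \<or>
       image_mset lab M = mset (map (\<lambda>t'. (s, t')) (above T t)))
      \<and> (\<forall>A \<in># M. shuf_ok S T A))"

definition is_shuffle :: "ptree \<Rightarrow> ptree \<Rightarrow> (nat list \<times> nat list) ltree \<Rightarrow> bool" where
  "is_shuffle S T A \<longleftrightarrow>
     lab A = ([], []) \<and>
     leaf_labels A = mset_set (leaves S \<times> leaves T) \<and>
     shuf_ok S T A"

definition sh :: "ptree \<Rightarrow> ptree \<Rightarrow> nat" where
  "sh S T = card {A. is_shuffle S T A}"

end

theory Submission
  imports Defs "HOL-Library.FuncSet"
begin


lemma subtr_append: "subtr S (p @ q) = subtr (subtr S p) q"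
  by (induction S p rule: subtr.induct) auto

lemma valid_append: "valid S (p @ q) = (valid S p \<and> valid (subtr S p) q)"
  by (induction S p rule: subtr.induct) auto

lemma valid_snoc: "valid S (p @ [i]) = (valid S p \<and> i < length (children (subtr S p)))"
  by (simp add: valid_append) (cases "subtr S p", auto)

lemma subtr_snoc: "valid S (p @ [i]) \<Longrightarrow> subtr S (p @ [i]) = children (subtr S p) ! i"
  by (simp add: subtr_append) (cases "subtr S p", auto)

lemma size_child: "t \<in> set ts \<Longrightarrow> size t < size (Nd ts)"
  by (induction ts) auto

lemma finite_valid: "finite {p. valid S p}"
proof (induction S)
  case (Nd ts)
  have "{p. valid (Nd ts) p} \<subseteq> insert [] (\<Union>i<length ts. (Cons i) ` {p. valid (ts!i) p})"
  proof
    fix p assume "p \<in> {p. valid (Nd ts) p}"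
    then show "p \<in> insert [] (\<Union>i<length ts. (Cons i) ` {p. valid (ts!i) p})"
      by (cases p) auto
  qed
  moreover have "finite (insert [] (\<Union>i<length ts. (Cons i) ` {p. valid (ts!i) p}))"
    using Nd by auto
  ultimately show ?case by (rule finite_subset)
qed

definition LB :: "ptree \<Rightarrow> nat list \<Rightarrow> nat list set" where
  "LB S s = {p \<in> leaves S. \<exists>q. p = s @ q}"

lemma finite_LB: "finite (LB S s)"
  by (rule finite_subset[OF _ finite_valid[of S]]) (auto simp: LB_def leaves_def edges_def)

lemma LB_Nil: "LB S [] = leaves S"
  by (auto simp: LB_def)

lemma LB_leaf: "valid S s \<Longrightarrow> children (subtr S s) = [] \<Longrightarrow> LB S s = {s}"
proof -
  assume v: "valid S s" and l: "children (subtr S s) = []"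
  have "subtr S s = Nd []" using l by (cases "subtr S s") auto
  then show ?thesis using v l
  proof -
    have "\<And>q. valid (Nd []) q \<Longrightarrow> q = []" by (case_tac q) auto
    then show ?thesis using v l \<open>subtr S s = Nd []\<close>
      by (auto simp: LB_def leaves_def edges_def valid_append subtr_append)
  qed
qed

lemma LB_node: "valid S s \<Longrightarrow> LB S s = (if children (subtr S s) = [] then {s} else
    (\<Union>i<length (children (subtr S s)). LB S (s @ [i])))"
proof (cases "children (subtr S s) = []")
  case True
  assume "valid S s" then show ?thesis using True LB_leaf by simp
next
  case False
  assume v: "valid S s"
  have "LB S s = (\<Union>i<length (children (subtr S s)). LB S (s @ [i]))"
  proof
    show "LB S s \<subseteq> (\<Union>i<length (children (subtr S s)). LB S (s @ [i]))"
    proof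
      fix p assume p: "p \<in> LB S s"
      then obtain q where q: "p = s @ q" "valid S p" "children (subtr S p) = []"
        by (auto simp: LB_def leaves_def edges_def)
      have "q \<noteq> []" using q False by auto
      then obtain i q' where "q = i # q'" by (cases q) auto
      then have "p = (s @ [i]) @ q'" using q by simp
      moreover have "i < length (children (subtr S s))" using q \<open>q = i # q'\<close>
        by (cases "subtr S s") (auto simp: valid_append)
      ultimately show "p \<in> (\<Union>i<length (children (subtr S s)). LB S (s @ [i]))"
        using q by (auto simp: LB_def leaves_def edges_def)
    qed
  next
    show "(\<Union>i<length (children (subtr S s)). LB S (s @ [i])) \<subseteq> LB S s"
      by (auto simp: LB_def)
  qed
  then show ?thesis using False by simp
qed



definition G :: "ptree \<Rightarrow> ptree \<Rightarrow> nat list \<times> nat list \<Rightarrow> (nat list \<times> nat list) ltree set" where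
  "G S T l = {A. lab A = l \<and> leaf_labels A = mset_set (LB S (fst l) \<times> LB T (snd l)) \<and> shuf_ok S T A}"

definition D :: "nat list \<times> nat list \<Rightarrow> (nat list \<times> nat list) set" where
  "D l = {x. \<exists>a b. fst x = fst l @ a \<and> snd x = snd l @ b}"

definition E :: "ptree \<Rightarrow> ptree \<Rightarrow> nat list \<times> nat list \<Rightarrow> (nat list \<times> nat list) set" where
  "E S T l = LB S (fst l) \<times> LB T (snd l)"

lemma E_D: "E S T l \<subseteq> D l"
  by (auto simp: E_def D_def LB_def)

lemma finite_E: "finite (E S T l)"
  by (simp add: E_def finite_LB)

lemma D_trans: "l' \<in> D l \<Longrightarrow> D l' \<subseteq> D l"
  by (auto simp: D_def)

lemma desc: "shuf_ok S T A \<Longrightarrow> x \<in># leaf_labels A \<Longrightarrow> x \<in> D (lab A)"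
proof (induction S T A arbitrary: x rule: shuf_ok.induct)
  case (1 S T s t M)
  show ?case
  proof (cases "M = {#}")
    case True
    then show ?thesis using 1 by (auto simp: D_def)
  next
    case False
    then obtain A' where A': "A' \<in># M" "x \<in># leaf_labels A'" using 1(3) by auto
    have "x \<in> D (lab A')" using 1 A' by auto
    moreover have "lab A' \<in># image_mset lab M" using A' by auto
    note mem = this
    have disj: "image_mset lab M = mset (map (\<lambda>s'. (s', t)) (above S s)) \<or> image_mset lab M = mset (map (\<lambda>t'. (s, t')) (above T t))"
      using 1(2) False unfolding shuf_ok.simps by blast
    have "lab A' \<in> set (map (\<lambda>s'. (s', t)) (above S s)) \<or> lab A' \<in> set (map (\<lambda>t'. (s, t')) (above T t))"
      using disj
    proof
      assume h: "image_mset lab M = mset (map (\<lambda>s'. (s', t)) (above S s))"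
      have "lab A' \<in># mset (map (\<lambda>s'. (s', t)) (above S s))" using mem unfolding h .
      then show ?thesis by (simp only: set_mset_mset simp_thms)
    next
      assume h: "image_mset lab M = mset (map (\<lambda>t'. (s, t')) (above T t))"
      have "lab A' \<in># mset (map (\<lambda>t'. (s, t')) (above T t))" using mem unfolding h .
      then show ?thesis by (simp only: set_mset_mset simp_thms)
    qed
    then have "lab A' \<in> D (s, t)"
      by (auto simp: above_def D_def)
    ultimately show ?thesis using D_trans[of "lab A'" "(s,t)"] by (simp only: lab.simps) blast
  qed
qed

lemma mset_rep:
  assumes "image_mset lab M = mset ls" "distinct ls"
  shows "\<exists>h. M = mset (map h ls) \<and> (\<forall>l\<in>set ls. lab (h l) = l)"
  using assms
proof (induction ls arbitrary: M)
  case Nil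
  then show ?case by auto
next
  case (Cons l ls)
  have "l \<in># image_mset lab M" using Cons by simp
  then obtain A where A: "A \<in># M" "lab A = l" by auto
  then obtain M' where M': "M = add_mset A M'" by (blast dest: multi_member_split)
  have "image_mset lab M' = mset ls" using Cons(2) M' A by simp
  then obtain h where h: "M' = mset (map h ls)" "\<forall>l\<in>set ls. lab (h l) = l"
    using Cons by auto
  let ?h = "h(l := A)"
  have eq: "map ?h ls = map h ls" using Cons(3) by (auto intro: map_cong)
  have "mset (map ?h (l # ls)) = add_mset A (mset (map ?h ls))" by simp
  also have "\<dots> = add_mset A (mset (map h ls))" using eq by (simp only:)
  also have "\<dots> = M" using h M' by simp
  finally have "M = mset (map ?h (l # ls))" by simp
  moreover have "\<forall>l'\<in>set (l # ls). lab (?h l') = l'" using h A by auto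
  ultimately show ?case by blast
qed

lemma filter_sum_list: "filter_mset P (sum_list (map X ls)) = sum_list (map (\<lambda>l. filter_mset P (X l)) ls)"
  by (induction ls) (auto simp: filter_union_mset)

lemma mset_set_UN:
  assumes "finite L" "\<forall>l\<in>L. finite (F l)" "\<forall>l1\<in>L. \<forall>l2\<in>L. l1 \<noteq> l2 \<longrightarrow> F l1 \<inter> F l2 = {}"
  shows "mset_set (\<Union>l\<in>L. F l) = (\<Sum>l\<in>L. mset_set (F l))"
  using assms
proof (induction L rule: finite_induct)
  case empty
  then show ?case by simp
next
  case (insert x L)
  have "mset_set (\<Union>l\<in>insert x L. F l) = mset_set (F x \<union> (\<Union>l\<in>L. F l))" by simp
  also have "\<dots> = mset_set (F x) + mset_set (\<Union>l\<in>L. F l)"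
    using insert by (intro mset_set_Union) auto
  finally show ?case using insert by simp
qed

lemma split_lemma:
  assumes "distinct ls" "sum_list (map X ls) = mset_set (\<Union>l\<in>set ls. F l)"
    "\<forall>l\<in>set ls. set_mset (X l) \<subseteq> DD l" "\<forall>l\<in>set ls. F l \<subseteq> DD l \<and> finite (F l)"
    "\<forall>l1\<in>set ls. \<forall>l2\<in>set ls. l1 \<noteq> l2 \<longrightarrow> DD l1 \<inter> DD l2 = {}" "l0 \<in> set ls"
  shows "X l0 = mset_set (F l0)"
proof -
  let ?P = "\<lambda>x. x \<in> DD l0"
  have "filter_mset ?P (sum_list (map X ls)) = sum_list (map (\<lambda>l. filter_mset ?P (X l)) ls)"
    by (rule filter_sum_list)
  also have "\<dots> = sum_list (map (\<lambda>l. if l = l0 then X l0 else {#}) ls)"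
  proof (rule arg_cong[where f = sum_list], rule map_cong[OF refl])
    fix l assume l: "l \<in> set ls"
    show "filter_mset ?P (X l) = (if l = l0 then X l0 else {#})"
    proof (cases "l = l0")
      case True
      then have "filter_mset ?P (X l) = filter_mset (\<lambda>x. True) (X l)"
        using assms(3) l by (intro filter_mset_cong) auto
      then show ?thesis using True by simp
    next
      case False
      have "\<forall>x. x \<in># X l \<longrightarrow> \<not> x \<in> DD l0" using False assms(3,5,6) l by blast
      then show ?thesis using False by (simp add: filter_mset_eq_mempty_iff)
    qed
  qed
  also have "\<dots> = (\<Sum>l\<in>set ls. if l = l0 then X l0 else {#})"
    using assms(1) by (rule sum_list_distinct_conv_sum_set)
  also have "\<dots> = X l0" using assms(6) by simp
  finally have 1: "filter_mset ?P (sum_list (map X ls)) = X l0" .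
  have "filter_mset ?P (mset_set (\<Union>l\<in>set ls. F l)) = mset_set {x \<in> (\<Union>l\<in>set ls. F l). ?P x}"
    using assms(4) by (intro filter_mset_mset_set) auto
  also have "{x \<in> (\<Union>l\<in>set ls. F l). ?P x} = F l0"
  proof
    show "{x \<in> (\<Union>l\<in>set ls. F l). ?P x} \<subseteq> F l0"
    proof
      fix x assume "x \<in> {x \<in> (\<Union>l\<in>set ls. F l). ?P x}"
      then obtain l where l: "l \<in> set ls" "x \<in> F l" "x \<in> DD l0" by auto
      then have "x \<in> DD l" using assms(4) by auto
      then have "l = l0" using assms(5,6) l by blast
      then show "x \<in> F l0" using l by simp
    qed
  next
    show "F l0 \<subseteq> {x \<in> (\<Union>l\<in>set ls. F l). ?P x}" using assms(4,6) by auto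
  qed
  finally show ?thesis using 1 assms(2) by simp
qed



definition Dpw :: "(nat list \<times> nat list) list \<Rightarrow> bool" where
  "Dpw ls = (\<forall>l1\<in>set ls. \<forall>l2\<in>set ls. l1 \<noteq> l2 \<longrightarrow> D l1 \<inter> D l2 = {})"

definition CH :: "ptree \<Rightarrow> ptree \<Rightarrow> (nat list \<times> nat list) list \<Rightarrow> (nat list \<times> nat list) ltree multiset set" where
  "CH S T ls = {M. image_mset lab M = mset ls \<and> (\<forall>A\<in>#M. A \<in> G S T (lab A))}"

lemma sum_mset_map: "sum_mset (image_mset f (mset (map h ls))) = sum_list (map (\<lambda>l. f (h l)) ls)"
  by (induction ls) auto

lemma children_in_G:
  assumes "image_mset lab M = mset ls" "distinct ls" "\<forall>A\<in>#M. shuf_ok S T A"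
    "sum_mset (image_mset leaf_labels M) = mset_set (\<Union>l\<in>set ls. E S T l)" "Dpw ls"
  shows "\<forall>A\<in>#M. A \<in> G S T (lab A)"
proof
  fix A assume A: "A \<in># M"
  obtain h where h: "M = mset (map h ls)" "\<forall>l\<in>set ls. lab (h l) = l"
    using mset_rep[OF assms(1,2)] by blast
  obtain l0 where l0: "l0 \<in> set ls" "A = h l0" using A h by auto
  have hs: "\<forall>l\<in>set ls. shuf_ok S T (h l)" using assms(3) h by auto
  have "sum_mset (image_mset leaf_labels M) = sum_list (map (\<lambda>l. leaf_labels (h l)) ls)"
    unfolding h(1) by (rule sum_mset_map)
  then have "sum_list (map (leaf_labels \<circ> h) ls) = mset_set (\<Union>l\<in>set ls. E S T l)"
    using assms(4) by (simp add: comp_def)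
  then have "(leaf_labels \<circ> h) l0 = mset_set (E S T l0)"
  proof (rule split_lemma[OF assms(2) _ _ _ _ l0(1), where DD = D])
    show "\<forall>l\<in>set ls. set_mset ((leaf_labels \<circ> h) l) \<subseteq> D l"
      using hs h(2) desc by fastforce
    show "\<forall>l\<in>set ls. E S T l \<subseteq> D l \<and> finite (E S T l)" using E_D finite_E by auto
    show "\<forall>l1\<in>set ls. \<forall>l2\<in>set ls. l1 \<noteq> l2 \<longrightarrow> D l1 \<inter> D l2 = {}" using assms(5) by (simp add: Dpw_def)
  qed
  then show "A \<in> G S T (lab A)" using l0 h hs by (auto simp: G_def E_def)
qed

lemma children_up:
  assumes "image_mset lab M = mset ls" "distinct ls" "\<forall>A\<in>#M. A \<in> G S T (lab A)" "Dpw ls"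
  shows "sum_mset (image_mset leaf_labels M) = mset_set (\<Union>l\<in>set ls. E S T l)"
proof -
  obtain h where h: "M = mset (map h ls)" "\<forall>l\<in>set ls. lab (h l) = l"
    using mset_rep[OF assms(1,2)] by blast
  have "sum_mset (image_mset leaf_labels M) = sum_list (map (\<lambda>l. leaf_labels (h l)) ls)"
    unfolding h(1) by (rule sum_mset_map)
  also have "\<dots> = sum_list (map (\<lambda>l. mset_set (E S T l)) ls)"
    using assms(3) h by (intro arg_cong[where f=sum_list] map_cong) (auto simp: G_def E_def)
  also have "\<dots> = (\<Sum>l\<in>set ls. mset_set (E S T l))"
    using assms(2) by (rule sum_list_distinct_conv_sum_set)
  also have "\<dots> = mset_set (\<Union>l\<in>set ls. E S T l)"
  proof (rule mset_set_UN[symmetric])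
    show "\<forall>l1\<in>set ls. \<forall>l2\<in>set ls. l1 \<noteq> l2 \<longrightarrow> E S T l1 \<inter> E S T l2 = {}"
      using assms(4) E_D unfolding Dpw_def by blast
  qed (auto simp: finite_E)
  finally show ?thesis .
qed

abbreviation "ch S s \<equiv> children (subtr S s)"
definition "lsS S s t = map (\<lambda>s'. (s', t)) (above S s)"
definition "lsT T s t = map (\<lambda>t'. (s, t')) (above T t)"

lemma node_in_G_iff:
  assumes "distinct ls" "ls \<noteq> []" "Dpw ls" "(\<Union>l\<in>set ls. E S T l) = E S T (s,t)"
    "ls = lsS S s t \<or> ls = lsT T s t" "image_mset lab M = mset ls"
  shows "LN (s,t) M \<in> G S T (s,t) \<longleftrightarrow> (\<forall>A\<in>#M. A \<in> G S T (lab A))"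
proof -
  have M: "M \<noteq> {#}" using assms(2,6) by auto
  have ok: "shuf_ok S T (LN (s,t) M) \<longleftrightarrow> (\<forall>A\<in>#M. shuf_ok S T A)"
    using assms(5,6) by (auto simp: lsS_def lsT_def)
  have ll: "leaf_labels (LN (s,t) M) = sum_mset (image_mset leaf_labels M)" using M by simp
  show ?thesis
  proof
    assume a: "LN (s,t) M \<in> G S T (s,t)"
    then have "\<forall>A\<in>#M. shuf_ok S T A" using ok by (simp add: G_def)
    moreover have "sum_mset (image_mset leaf_labels M) = mset_set (\<Union>l\<in>set ls. E S T l)"
      using a ll assms(4) by (simp add: G_def E_def)
    ultimately show "\<forall>A\<in>#M. A \<in> G S T (lab A)"
      using children_in_G[OF assms(6,1)] assms(3) by blast
  next
    assume a: "\<forall>A\<in>#M. A \<in> G S T (lab A)"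
    then have "sum_mset (image_mset leaf_labels M) = mset_set (\<Union>l\<in>set ls. E S T l)"
      using children_up[OF assms(6,1)] assms(3) by blast
    then have "leaf_labels (LN (s,t) M) = mset_set (E S T (s,t))" using ll assms(4) by simp
    moreover have "shuf_ok S T (LN (s,t) M)" using ok a by (simp add: G_def)
    ultimately show "LN (s,t) M \<in> G S T (s,t)" by (simp add: G_def E_def)
  qed
qed

lemma above_Nil: "above S s = [] \<longleftrightarrow> ch S s = []"
  by (simp add: above_def)

lemma lsS_props:
  assumes "valid S s" "ch S s \<noteq> []"
  shows "distinct (lsS S s t)" "lsS S s t \<noteq> []" "Dpw (lsS S s t)"
    "(\<Union>l\<in>set (lsS S s t). E S T l) = E S T (s,t)"
    "set (lsS S s t) = (\<lambda>i. (s @ [i], t)) ` {..<length (ch S s)}"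
proof -
  show "distinct (lsS S s t)" by (auto simp: lsS_def above_def distinct_map inj_on_def)
  show "lsS S s t \<noteq> []" using assms by (simp add: lsS_def above_def)
  show "Dpw (lsS S s t)" by (auto simp: Dpw_def lsS_def above_def D_def)
  show st: "set (lsS S s t) = (\<lambda>i. (s @ [i], t)) ` {..<length (ch S s)}"
    by (auto simp: lsS_def above_def)
  have "(\<Union>l\<in>set (lsS S s t). E S T l) = (\<Union>i<length (ch S s). LB S (s @ [i])) \<times> LB T t"
    unfolding st by (auto simp: E_def)
  also have "\<dots> = E S T (s,t)" using LB_node[OF assms(1)] assms(2) by (simp add: E_def)
  finally show "(\<Union>l\<in>set (lsS S s t). E S T l) = E S T (s,t)" .
qed

lemma lsT_props:
  assumes "valid T t" "ch T t \<noteq> []"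
  shows "distinct (lsT T s t)" "lsT T s t \<noteq> []" "Dpw (lsT T s t)"
    "(\<Union>l\<in>set (lsT T s t). E S T l) = E S T (s,t)"
    "set (lsT T s t) = (\<lambda>i. (s, t @ [i])) ` {..<length (ch T t)}"
proof -
  show "distinct (lsT T s t)" by (auto simp: lsT_def above_def distinct_map inj_on_def)
  show "lsT T s t \<noteq> []" using assms by (simp add: lsT_def above_def)
  show "Dpw (lsT T s t)" by (auto simp: Dpw_def lsT_def above_def D_def)
  show st: "set (lsT T s t) = (\<lambda>i. (s, t @ [i])) ` {..<length (ch T t)}"
    by (auto simp: lsT_def above_def)
  have "(\<Union>l\<in>set (lsT T s t). E S T l) = LB S s \<times> (\<Union>i<length (ch T t). LB T (t @ [i]))"
    unfolding st by (auto simp: E_def)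
  also have "\<dots> = E S T (s,t)" using LB_node[OF assms(1)] assms(2) by (simp add: E_def)
  finally show "(\<Union>l\<in>set (lsT T s t). E S T l) = E S T (s,t)" .
qed



lemma image_mset_map: "image_mset f (mset (map h ls)) = mset (map (\<lambda>l. f (h l)) ls)"
  by (induction ls) auto

lemma bij_CH:
  assumes "distinct ls"
  shows "bij_betw (\<lambda>h. mset (map h ls)) (PiE (set ls) (G S T)) (CH S T ls)"
  unfolding bij_betw_def
proof
  show "inj_on (\<lambda>h. mset (map h ls)) (PiE (set ls) (G S T))"
  proof (rule inj_onI)
    fix h1 h2 assume h1: "h1 \<in> PiE (set ls) (G S T)" and h2: "h2 \<in> PiE (set ls) (G S T)"
      and eq: "mset (map h1 ls) = mset (map h2 ls)"
    show "h1 = h2"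
    proof (rule PiE_ext[OF h1 h2])
      fix l assume l: "l \<in> set ls"
      have "h1 l \<in> set (map h1 ls)" using l by simp
      then have "h1 l \<in># mset (map h1 ls)" by (simp only: set_mset_mset)
      then have "h1 l \<in># mset (map h2 ls)" by (simp only: eq)
      then obtain l' where l': "l' \<in> set ls" "h1 l = h2 l'" by auto
      have "lab (h1 l) = l" using h1 l by (auto simp: G_def)
      moreover have "lab (h2 l') = l'" using h2 l' by (auto simp: G_def)
      ultimately show "h1 l = h2 l" using l' by simp
    qed
  qed
next
  show "(\<lambda>h. mset (map h ls)) ` PiE (set ls) (G S T) = CH S T ls"
  proof
    show "(\<lambda>h. mset (map h ls)) ` PiE (set ls) (G S T) \<subseteq> CH S T ls"
    proof
      fix M assume "M \<in> (\<lambda>h. mset (map h ls)) ` PiE (set ls) (G S T)"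
      then obtain h where h: "h \<in> PiE (set ls) (G S T)" "M = mset (map h ls)" by auto
      have lh: "\<forall>l\<in>set ls. lab (h l) = l" using h by (auto simp: G_def)
      have "map (\<lambda>l. lab (h l)) ls = ls" using lh by (simp add: map_idI)
      then have "image_mset lab M = mset ls" using h(2) by (simp only: image_mset_map)
      moreover have "\<forall>A\<in>#M. A \<in> G S T (lab A)" using h lh by auto
      ultimately show "M \<in> CH S T ls" by (simp add: CH_def)
    qed
  next
    show "CH S T ls \<subseteq> (\<lambda>h. mset (map h ls)) ` PiE (set ls) (G S T)"
    proof
      fix M assume M: "M \<in> CH S T ls"
      obtain h where h: "M = mset (map h ls)" "\<forall>l\<in>set ls. lab (h l) = l"
        using mset_rep[OF _ assms] M by (auto simp: CH_def)
      let ?h = "restrict h (set ls)"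
      have "map ?h ls = map h ls" by simp
      moreover have "?h \<in> PiE (set ls) (G S T)" using M h by (auto simp: CH_def)
      ultimately show "M \<in> (\<lambda>h. mset (map h ls)) ` PiE (set ls) (G S T)"
        using h(1) by (metis image_eqI)
    qed
  qed
qed

lemma CH_fin_card:
  assumes "distinct ls" "\<forall>l\<in>set ls. finite (G S T l)"
  shows "finite (CH S T ls)" "card (CH S T ls) = (\<Prod>l\<in>set ls. card (G S T l))"
proof -
  have b: "bij_betw (\<lambda>h. mset (map h ls)) (PiE (set ls) (G S T)) (CH S T ls)" by (rule bij_CH[OF assms(1)])
  have "finite (PiE (set ls) (G S T))" using assms(2) by (intro finite_PiE) auto
  then show "finite (CH S T ls)" using b bij_betw_finite by blast
  have "card (CH S T ls) = card (PiE (set ls) (G S T))" using b by (simp add: bij_betw_same_card)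
  also have "\<dots> = (\<Prod>l\<in>set ls. card (G S T l))" by (simp add: card_PiE)
  finally show "card (CH S T ls) = (\<Prod>l\<in>set ls. card (G S T l))" .
qed

lemma leaf_iff: "p \<in> leaves S \<longleftrightarrow> valid S p \<and> ch S p = []"
  by (simp add: leaves_def edges_def)

lemma G_decomp:
  assumes vs: "valid S s" and vt: "valid T t"
  shows "G S T (s,t) = (if ch S s = [] \<and> ch T t = [] then {LN (s,t) {#}} else {})
     \<union> (if ch S s = [] then {} else LN (s,t) ` CH S T (lsS S s t))
     \<union> (if ch T t = [] then {} else LN (s,t) ` CH S T (lsT T s t))" (is "_ = ?R")
proof
  show "G S T (s,t) \<subseteq> ?R"
  proof
    fix A assume A: "A \<in> G S T (s,t)"
    obtain a M where aM: "A = LN a M" by (cases A)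
    have a: "a = (s,t)" using A aM by (simp add: G_def)
    have ok: "M = {#} \<or> image_mset lab M = mset (lsS S s t) \<or> image_mset lab M = mset (lsT T s t)"
      using A aM a unfolding G_def lsS_def lsT_def by (simp only: mem_Collect_eq shuf_ok.simps)
    show "A \<in> ?R"
    proof (cases "M = {#}")
      case True
      then have "{#(s,t)#} = mset_set (LB S s \<times> LB T t)" using A aM a by (simp add: G_def)
      then have "(s,t) \<in> LB S s \<times> LB T t"
        by (metis finite_SigmaI finite_LB elem_mset_set union_single_eq_member)
      then have "ch S s = [] \<and> ch T t = []" by (simp add: LB_def leaf_iff)
      then show ?thesis using True aM a by simp
    next
      case False
      then have o2: "image_mset lab M = mset (lsS S s t) \<or> image_mset lab M = mset (lsT T s t)" using ok by blast
      then show ?thesis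
      proof
        assume h: "image_mset lab M = mset (lsS S s t)"
        then have ne: "ch S s \<noteq> []" using False by (auto simp: lsS_def above_def)
        note P = lsS_props(1-3)[OF vs ne, of t] lsS_props(4)[OF vs ne, where t=t and T=T]
        have "\<forall>A\<in>#M. A \<in> G S T (lab A)"
          using node_in_G_iff[OF P(1-4) _ h] A aM a by simp
        then have "M \<in> CH S T (lsS S s t)" using h by (simp add: CH_def)
        then show ?thesis using ne aM a by simp
      next
        assume h: "image_mset lab M = mset (lsT T s t)"
        then have ne: "ch T t \<noteq> []" using False by (auto simp: lsT_def above_def)
        note P = lsT_props(1-3)[OF vt ne, of s] lsT_props(4)[OF vt ne, where s=s and S=S]
        have "\<forall>A\<in>#M. A \<in> G S T (lab A)"
          using node_in_G_iff[OF P(1-4) _ h] A aM a by simp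
        then have "M \<in> CH S T (lsT T s t)" using h by (simp add: CH_def)
        then show ?thesis using ne aM a by simp
      qed
    qed
  qed
next
  show "?R \<subseteq> G S T (s,t)"
  proof
    fix A assume A: "A \<in> ?R"
    consider (L) "ch S s = [] \<and> ch T t = []" "A = LN (s,t) {#}"
      | (SS) M where "ch S s \<noteq> []" "A = LN (s,t) M" "M \<in> CH S T (lsS S s t)"
      | (TT) M where "ch T t \<noteq> []" "A = LN (s,t) M" "M \<in> CH S T (lsT T s t)"
      using A by (auto split: if_splits)
    then show "A \<in> G S T (s,t)"
    proof cases
      case L
      then show ?thesis using LB_leaf[OF vs] LB_leaf[OF vt] by (simp add: G_def)
    next
      case (SS M)
      note P = lsS_props(1-3)[OF vs SS(1), of t] lsS_props(4)[OF vs SS(1), where t=t and T=T]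
      show ?thesis using node_in_G_iff[OF P(1-4), of M] SS by (simp add: CH_def)
    next
      case (TT M)
      note P = lsT_props(1-3)[OF vt TT(1), of s] lsT_props(4)[OF vt TT(1), where s=s and S=S]
      show ?thesis using node_in_G_iff[OF P(1-4), of M] TT by (simp add: CH_def)
    qed
  qed
qed



lemma subtr_Nd: "subtr S s = Nd (ch S s)"
  by (cases "subtr S s") auto

lemma child_valid: "valid S s \<Longrightarrow> i < length (ch S s) \<Longrightarrow> valid S (s @ [i])"
  by (simp add: valid_snoc)

lemma child_size: "valid S s \<Longrightarrow> i < length (ch S s) \<Longrightarrow> size (subtr S (s @ [i])) < size (subtr S s)"
proof -
  assume v: "valid S s" and i: "i < length (ch S s)"
  have "subtr S (s @ [i]) = ch S s ! i" using subtr_snoc child_valid[OF v i] by blast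
  moreover have "ch S s ! i \<in> set (ch S s)" using i by simp
  ultimately show ?thesis using size_child subtr_Nd by metis
qed

lemma G_finite: "valid S s \<Longrightarrow> valid T t \<Longrightarrow> finite (G S T (s,t))"
proof (induction "size (subtr S s) + size (subtr T t)" arbitrary: s t rule: less_induct)
  case less
  have f1: "ch S s \<noteq> [] \<Longrightarrow> finite (CH S T (lsS S s t))"
  proof (rule CH_fin_card(1))
    assume ne: "ch S s \<noteq> []"
    show "distinct (lsS S s t)" using lsS_props(1)[OF less(2) ne] .
    show "\<forall>l\<in>set (lsS S s t). finite (G S T l)"
    proof
      fix l assume "l \<in> set (lsS S s t)"
      then obtain i where i: "i < length (ch S s)" "l = (s @ [i], t)"
        using lsS_props(5)[OF less(2) ne] by auto
      show "finite (G S T l)" unfolding i(2)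
        by (rule less(1)) (use i less child_size child_valid in auto)
    qed
  qed
  have f2: "ch T t \<noteq> [] \<Longrightarrow> finite (CH S T (lsT T s t))"
  proof (rule CH_fin_card(1))
    assume ne: "ch T t \<noteq> []"
    show "distinct (lsT T s t)" using lsT_props(1)[OF less(3) ne] .
    show "\<forall>l\<in>set (lsT T s t). finite (G S T l)"
    proof
      fix l assume "l \<in> set (lsT T s t)"
      then obtain i where i: "i < length (ch T t)" "l = (s, t @ [i])"
        using lsT_props(5)[OF less(3) ne] by auto
      show "finite (G S T l)" unfolding i(2)
        by (rule less(1)) (use i less child_size child_valid in auto)
    qed
  qed
  show ?case unfolding G_decomp[OF less(2,3)] using f1 f2 by auto
qed

lemma card_G:
  assumes vs: "valid S s" and vt: "valid T t"
  shows "card (G S T (s,t)) = (if ch S s = [] \<and> ch T t = [] then 1 else 0)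
     + (if ch S s = [] then 0 else (\<Prod>i<length (ch S s). card (G S T (s @ [i], t))))
     + (if ch T t = [] then 0 else (\<Prod>i<length (ch T t). card (G S T (s, t @ [i]))))"
proof -
  define X1 where "X1 = (if ch S s = [] \<and> ch T t = [] then {LN (s,t) {#}} else {})"
  define X2 where "X2 = (if ch S s = [] then {} else LN (s,t) ` CH S T (lsS S s t))"
  define X3 where "X3 = (if ch T t = [] then {} else LN (s,t) ` CH S T (lsT T s t))"
  have GX: "G S T (s,t) = X1 \<union> X2 \<union> X3" unfolding X1_def X2_def X3_def by (rule G_decomp[OF vs vt])
  have fin: "finite X1" "finite X2" "finite X3" using G_finite[OF vs vt] unfolding GX by auto
  have d1: "X1 \<inter> X2 = {}" unfolding X1_def X2_def by auto
  have d2: "(X1 \<union> X2) \<inter> X3 = {}"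
  proof -
    have "X1 \<inter> X3 = {}" unfolding X1_def X3_def by auto
    moreover have "X2 \<inter> X3 = {}"
    proof (rule ccontr)
      assume "X2 \<inter> X3 \<noteq> {}"
      then obtain M where M: "ch S s \<noteq> []" "ch T t \<noteq> []" "M \<in> CH S T (lsS S s t)" "M \<in> CH S T (lsT T s t)"
        unfolding X2_def X3_def by (auto split: if_splits)
      then have "mset (lsS S s t) = mset (lsT T s t)" by (simp add: CH_def)
      then have "set (lsS S s t) = set (lsT T s t)" by (metis set_mset_mset)
      moreover have "(s @ [0], t) \<in> set (lsS S s t)" using lsS_props(5)[OF vs M(1)] M(1) by auto
      ultimately show False using lsT_props(5)[OF vt M(2)] by auto
    qed
    ultimately show ?thesis by blast
  qed
  have inj: "\<And>X. inj_on (LN (s,t)) X" by (simp add: inj_on_def)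
  have c1: "card X1 = (if ch S s = [] \<and> ch T t = [] then 1 else 0)" unfolding X1_def by simp
  have c2: "card X2 = (if ch S s = [] then 0 else (\<Prod>i<length (ch S s). card (G S T (s @ [i], t))))"
  proof (cases "ch S s = []")
    case True then show ?thesis unfolding X2_def by simp
  next
    case ne: False
    have fl: "\<forall>l\<in>set (lsS S s t). finite (G S T l)"
      using lsS_props(5)[OF vs ne] G_finite child_valid[OF vs] vt by auto
    have "card X2 = card (CH S T (lsS S s t))" unfolding X2_def using ne inj by (simp add: card_image)
    also have "\<dots> = (\<Prod>l\<in>set (lsS S s t). card (G S T l))"
      using CH_fin_card(2)[OF lsS_props(1)[OF vs ne] fl] .
    also have "\<dots> = (\<Prod>i<length (ch S s). card (G S T (s @ [i], t)))"
      unfolding lsS_props(5)[OF vs ne] by (subst prod.reindex) (auto simp: inj_on_def)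
    finally show ?thesis using ne by simp
  qed
  have c3: "card X3 = (if ch T t = [] then 0 else (\<Prod>i<length (ch T t). card (G S T (s, t @ [i]))))"
  proof (cases "ch T t = []")
    case True then show ?thesis unfolding X3_def by simp
  next
    case ne: False
    have fl: "\<forall>l\<in>set (lsT T s t). finite (G S T l)"
      using lsT_props(5)[OF vt ne] G_finite child_valid[OF vt] vs by auto
    have "card X3 = card (CH S T (lsT T s t))" unfolding X3_def using ne inj by (simp add: card_image)
    also have "\<dots> = (\<Prod>l\<in>set (lsT T s t). card (G S T l))"
      using CH_fin_card(2)[OF lsT_props(1)[OF vt ne] fl] .
    also have "\<dots> = (\<Prod>i<length (ch T t). card (G S T (s, t @ [i])))"
      unfolding lsT_props(5)[OF vt ne] by (subst prod.reindex) (auto simp: inj_on_def)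
    finally show ?thesis using ne by simp
  qed
  have "card (G S T (s,t)) = card (X1 \<union> X2) + card X3"
    unfolding GX using fin d2 by (intro card_Un_disjoint) auto
  also have "card (X1 \<union> X2) = card X1 + card X2" using fin d1 by (intro card_Un_disjoint) auto
  finally show ?thesis using c1 c2 c3 by simp
qed



fun F :: "ptree \<Rightarrow> nat \<Rightarrow> nat" where
  "F (Nd ts) m = (if ts = [] then 1 else (\<Sum>j\<le>m. prod_list (map (\<lambda>t. F t j) ts)))"

lemma prod_list_nth: "prod_list (map f xs) = (\<Prod>i<length xs. f (xs ! i))"
  by (induction xs) (simp_all add: prod.lessThan_Suc_shift del: prod.lessThan_Suc)

lemma lin_sub: "k \<le> n \<Longrightarrow> subtr (lin n) (replicate k 0) = lin (n - k)"
proof (induction k arbitrary: n)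
  case 0 then show ?case by simp
next
  case (Suc k)
  then obtain n' where n: "n = Suc n'" by (cases n) auto
  then show ?case using Suc by simp
qed

lemma lin_valid: "k \<le> n \<Longrightarrow> valid (lin n) (replicate k 0)"
proof (induction k arbitrary: n)
  case 0 then show ?case by simp
next
  case (Suc k)
  then obtain n' where n: "n = Suc n'" by (cases n) auto
  then show ?case using Suc by simp
qed

lemma ch_lin: "k \<le> n \<Longrightarrow> ch (lin n) (replicate k 0) = (if k = n then [] else [lin (n - Suc k)])"
proof -
  assume k: "k \<le> n"
  show ?thesis
  proof (cases "n - k")
    case 0 then show ?thesis using lin_sub[OF k] k by simp
  next
    case (Suc m)
    then have "n - Suc k = m" by arith
    then show ?thesis using lin_sub[OF k] Suc by simp
  qed
qed

lemma card_lin: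
  "\<forall>s. valid S s \<longrightarrow> subtr S s = X \<longrightarrow> (\<forall>k\<le>n. card (G S (lin n) (s, replicate k 0)) = F X (n - k))"
proof (induction X)
  case (Nd ts)
  show ?case
  proof (intro allI impI)
    fix s k0 assume vs: "valid S s" and st: "subtr S s = Nd ts" and k0: "k0 \<le> n"
    have chs: "ch S s = ts" using st by simp
    have IH: "\<And>i k. i < length ts \<Longrightarrow> k \<le> n \<Longrightarrow> card (G S (lin n) (s @ [i], replicate k 0)) = F (ts ! i) (n - k)"
    proof -
      fix i k assume i: "i < length ts" and k: "k \<le> n"
      have v: "valid S (s @ [i])" using child_valid[OF vs] i chs by simp
      have "subtr S (s @ [i]) = ts ! i" using subtr_snoc[OF v] chs by simp
      then show "card (G S (lin n) (s @ [i], replicate k 0)) = F (ts ! i) (n - k)"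
        using Nd.IH[of "ts ! i"] i v k by auto
    qed
    have "\<forall>k. k \<le> n \<longrightarrow> n - k = d \<longrightarrow> card (G S (lin n) (s, replicate k 0)) = F (Nd ts) d" for d
    proof (induction d)
      case 0
      show ?case
      proof (intro allI impI)
        fix k assume k: "k \<le> n" "n - k = 0"
        then have kn: "k = n" by simp
        have "card (G S (lin n) (s, replicate k 0)) = (if ts = [] then 1 else 0)
           + (if ts = [] then 0 else (\<Prod>i<length ts. card (G S (lin n) (s @ [i], replicate k 0))))"
          using card_G[OF vs lin_valid[OF k(1)]] chs ch_lin[OF k(1)] kn by simp
        also have "\<dots> = F (Nd ts) 0" using IH k by (simp add: prod_list_nth)
        finally show "card (G S (lin n) (s, replicate k 0)) = F (Nd ts) 0" .
      qed
    next
      case (Suc d)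
      show ?case
      proof (intro allI impI)
        fix k assume k: "k \<le> n" "n - k = Suc d"
        then have kn: "k < n" by simp
        have r: "replicate k (0::nat) @ [0] = replicate (Suc k) 0" by (simp add: replicate_append_same)
        have "card (G S (lin n) (s, replicate k 0)) = 
            (if ts = [] then 0 else (\<Prod>i<length ts. card (G S (lin n) (s @ [i], replicate k 0))))
            + card (G S (lin n) (s, replicate (Suc k) 0))"
          using card_G[OF vs lin_valid[OF k(1)]] chs ch_lin[OF k(1)] kn r by simp
        also have "card (G S (lin n) (s, replicate (Suc k) 0)) = F (Nd ts) d"
        proof -
          have "Suc k \<le> n" "n - Suc k = d" using kn k by arith+
          then show ?thesis using Suc.IH by blast
        qed
        also have "(if ts = [] then 0 else (\<Prod>i<length ts. card (G S (lin n) (s @ [i], replicate k 0))))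
            = (if ts = [] then 0 else prod_list (map (\<lambda>t. F t (Suc d)) ts))"
          using IH k by (simp add: prod_list_nth)
        finally show "card (G S (lin n) (s, replicate k 0)) = F (Nd ts) (Suc d)" by simp
      qed
    qed
    then show "card (G S (lin n) (s, replicate k0 0)) = F (Nd ts) (n - k0)" using k0 by blast
  qed
qed

lemma sh_F: "sh S (lin n) = F S n"
proof -
  have "{A. is_shuffle S (lin n) A} = G S (lin n) ([], [])"
    by (auto simp: is_shuffle_def G_def LB_Nil)
  then have "sh S (lin n) = card (G S (lin n) ([], replicate 0 0))" by (simp add: sh_def)
  also have "\<dots> = F S n"
  proof -
    have "\<forall>k\<le>n. card (G S (lin n) ([], replicate k 0)) = F S (n - k)" using card_lin[of S S n] by simp
    then show ?thesis by (metis le0 diff_zero)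
  qed
  finally show ?thesis .
qed



lemma tele: "(of_nat m + 1 :: rat) ^ (d+1) = (\<Sum>j\<le>m. (of_nat j + 1) ^ (d+1) - (of_nat j) ^ (d+1))"
  by (induction m) (auto simp: add_ac)

lemma binom_diff: "((x::rat) + 1) ^ (d+1) - x ^ (d+1) = of_nat (d+1) * x ^ d + (\<Sum>i<d. of_nat ((d+1) choose i) * x ^ i)"
proof -
  have "(x + 1) ^ (d+1) = (\<Sum>k\<le>d+1. of_nat ((d+1) choose k) * x ^ k * 1 ^ (d + 1 - k))"
    by (rule binomial_ring)
  also have "\<dots> = (\<Sum>k\<le>d+1. of_nat ((d+1) choose k) * x ^ k)" by simp
  also have "\<dots> = (\<Sum>k<d. of_nat ((d+1) choose k) * x ^ k) + of_nat (d+1) * x ^ d + x ^ (d+1)"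
  proof -
    have e1: "(\<Sum>k\<le>Suc d. g k) = (\<Sum>k\<le>d. g k) + g (Suc d)" for g :: "nat \<Rightarrow> rat" by (rule sum.atMost_Suc)
    have e2: "(\<Sum>k\<le>d. g k) = (\<Sum>k<d. g k) + g d" for g :: "nat \<Rightarrow> rat"
      by (simp add: lessThan_Suc_atMost[symmetric])
    show ?thesis unfolding Suc_eq_plus1[symmetric] e1 e2 by simp
  qed
  finally show ?thesis by simp
qed

lemma powsum: "\<exists>r::rat poly. degree r \<le> d+1 \<and> coeff r (d+1) = 1 / of_nat (d+1) \<and>
   (\<forall>m::nat. poly r (of_nat m) = (\<Sum>j\<le>m. (of_nat j) ^ d))"
proof (induction d rule: less_induct)
  case (less d)
  then have "\<forall>i. \<exists>r::rat poly. i < d \<longrightarrow> (degree r \<le> i+1 \<and> coeff r (i+1) = 1 / of_nat (i+1) \<and>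
   (\<forall>m::nat. poly r (of_nat m) = (\<Sum>j\<le>m. (of_nat j) ^ i)))" by blast
  then have "\<exists>R :: nat \<Rightarrow> rat poly. \<forall>i. i < d \<longrightarrow> (degree (R i) \<le> i+1 \<and> coeff (R i) (i+1) = 1 / of_nat (i+1) \<and>
   (\<forall>m::nat. poly (R i) (of_nat m) = (\<Sum>j\<le>m. (of_nat j) ^ i)))" by (rule choice)
  then obtain R :: "nat \<Rightarrow> rat poly" where R: "\<And>i. i < d \<Longrightarrow> degree (R i) \<le> i+1 \<and> coeff (R i) (i+1) = 1 / of_nat (i+1) \<and>
   (\<forall>m::nat. poly (R i) (of_nat m) = (\<Sum>j\<le>m. (of_nat j) ^ i))" by blast
  define Q where "Q = (\<Sum>i<d. smult (of_nat ((d+1) choose i)) (R i))"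
  define r where "r = smult (1 / of_nat (d+1)) ([:1,1:] ^ (d+1) - Q)"
  have dQ: "degree Q \<le> d" unfolding Q_def
  proof (rule degree_sum_le)
    fix i assume "i \<in> {..<d}"
    then show "degree (smult (of_nat ((d+1) choose i)) (R i)) \<le> d"
      using R[of i] degree_smult_le[of _ "R i"] by fastforce
  qed (simp)
  have nz: "[:1,1::rat:] \<noteq> 0" by simp
  have dP: "degree ([:1,1:] ^ (d+1) :: rat poly) = d+1"
    unfolding degree_power_eq[OF nz] by simp
  have lP: "coeff ([:1,1:] ^ (d+1) :: rat poly) (d+1) = 1"
    using lead_coeff_power[of "[:1,1:] :: rat poly" "d+1"] dP by simp
  have "degree r \<le> d+1" unfolding r_def
    using degree_smult_le degree_diff_le[of "[:1,1:] ^ (d+1)" "d+1" Q] dP dQ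
    by (metis le_SucI order_refl order_trans Suc_eq_plus1)
  moreover have "coeff r (d+1) = 1 / of_nat (d+1)"
    unfolding r_def using lP coeff_eq_0[of Q "d+1"] dQ by simp
  moreover have "poly r (of_nat m) = (\<Sum>j\<le>m. (of_nat j) ^ d)" for m
  proof -
    have pQ: "poly Q (of_nat m) = (\<Sum>i<d. of_nat ((d+1) choose i) * (\<Sum>j\<le>m. (of_nat j :: rat) ^ i))"
      unfolding Q_def poly_sum using R by simp
    have "(of_nat m + 1 :: rat) ^ (d+1) = (\<Sum>j\<le>m. of_nat (d+1) * (of_nat j) ^ d + (\<Sum>i<d. of_nat ((d+1) choose i) * (of_nat j) ^ i))"
      by (subst tele) (simp only: binom_diff)
    also have "\<dots> = (\<Sum>j\<le>m. of_nat (d+1) * (of_nat j :: rat) ^ d) + (\<Sum>j\<le>m. \<Sum>i<d. of_nat ((d+1) choose i) * (of_nat j :: rat) ^ i)"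
      by (rule sum.distrib)
    also have "(\<Sum>j\<le>m. of_nat (d+1) * (of_nat j :: rat) ^ d) = of_nat (d+1) * (\<Sum>j\<le>m. (of_nat j) ^ d)"
      by (rule sum_distrib_left[symmetric])
    also have "(\<Sum>j\<le>m. \<Sum>i<d. of_nat ((d+1) choose i) * (of_nat j :: rat) ^ i) = (\<Sum>i<d. \<Sum>j\<le>m. of_nat ((d+1) choose i) * (of_nat j :: rat) ^ i)"
      by (rule sum.swap)
    also have "\<dots> = (\<Sum>i<d. of_nat ((d+1) choose i) * (\<Sum>j\<le>m. (of_nat j :: rat) ^ i))"
      by (simp only: sum_distrib_left)
    finally have "(of_nat m + 1 :: rat) ^ (d+1) - poly Q (of_nat m) = of_nat (d+1) * (\<Sum>j\<le>m. (of_nat j) ^ d)"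
      using pQ by simp
    then show ?thesis unfolding r_def by (simp add: field_simps)
  qed
  ultimately show ?case by blast
qed

lemma antisum: "\<exists>r::rat poly. degree r \<le> degree q + 1 \<and> coeff r (degree q + 1) = lead_coeff q / of_nat (degree q + 1) \<and>
   (\<forall>m::nat. poly r (of_nat m) = (\<Sum>j\<le>m. poly q (of_nat j)))"
proof -
  have "\<exists>R :: nat \<Rightarrow> rat poly. \<forall>i. degree (R i) \<le> i+1 \<and> coeff (R i) (i+1) = 1 / of_nat (i+1) \<and>
   (\<forall>m::nat. poly (R i) (of_nat m) = (\<Sum>j\<le>m. (of_nat j :: rat) ^ i))" by (rule choice, rule allI, rule powsum)
  then obtain R :: "nat \<Rightarrow> rat poly" where R: "\<And>i. degree (R i) \<le> i+1 \<and> coeff (R i) (i+1) = 1 / of_nat (i+1) \<and>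
   (\<forall>m::nat. poly (R i) (of_nat m) = (\<Sum>j\<le>m. (of_nat j) ^ i))" by blast
  define n where "n = degree q"
  define r where "r = (\<Sum>i\<le>n. smult (coeff q i) (R i))"
  have "degree r \<le> n + 1" unfolding r_def
  proof (rule degree_sum_le)
    fix i assume i: "i \<in> {..n}"
    show "degree (smult (coeff q i) (R i)) \<le> n + 1"
      by (rule order_trans[OF degree_smult_le]) (use R[of i] i in auto)
  qed (simp)
  moreover have "coeff r (n+1) = lead_coeff q / of_nat (n+1)"
  proof -
    have "coeff r (n+1) = (\<Sum>i\<le>n. coeff q i * coeff (R i) (n+1))" unfolding r_def by (simp add: coeff_sum)
    also have "\<dots> = (\<Sum>i<n. coeff q i * coeff (R i) (n+1)) + coeff q n * coeff (R n) (n+1)"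
      by (simp add: lessThan_Suc_atMost[symmetric])
    also have "(\<Sum>i<n. coeff q i * coeff (R i) (n+1)) = 0"
    proof (rule sum.neutral, rule ballI)
      fix i assume "i \<in> {..<n}"
      then have "degree (R i) < n + 1" using R[of i] by auto
      then show "coeff q i * coeff (R i) (n+1) = 0" by (simp add: coeff_eq_0)
    qed
    finally show ?thesis using R[of n] n_def by simp
  qed
  moreover have "poly r (of_nat m) = (\<Sum>j\<le>m. poly q (of_nat j))" for m
  proof -
    have "poly r (of_nat m) = (\<Sum>i\<le>n. coeff q i * (\<Sum>j\<le>m. (of_nat j) ^ i))"
      unfolding r_def poly_sum using R by simp
    also have "\<dots> = (\<Sum>i\<le>n. \<Sum>j\<le>m. coeff q i * (of_nat j) ^ i)"
      by (simp only: sum_distrib_left)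
    also have "\<dots> = (\<Sum>j\<le>m. \<Sum>i\<le>n. coeff q i * (of_nat j) ^ i)"
      by (rule sum.swap)
    also have "\<dots> = (\<Sum>j\<le>m. poly q (of_nat j))" by (simp add: poly_altdef n_def)
    finally show ?thesis .
  qed
  ultimately show ?thesis unfolding n_def by blast
qed



lemma prod_list_pos: "(\<forall>x\<in>set xs. (0::nat) < f x) \<Longrightarrow> 0 < prod_list (map f xs)"
  by (induction xs) auto

lemma tfact_pos: "0 < tfact X"
proof (induction X)
  case (Nd ts)
  then show ?case using prod_list_pos[of ts tfact] by simp
qed

lemma prodpoly:
  assumes "\<forall>t\<in>set ts. degree (Q t) = nverts t \<and> lead_coeff (Q t) = 1 / of_nat (tfact t) \<and>
     (\<forall>m::nat. poly (Q t) (of_nat m) = of_nat (F t m))"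
  shows "degree (prod_list (map Q ts)) = sum_list (map nverts ts) \<and>
     lead_coeff (prod_list (map Q ts)) = 1 / of_nat (prod_list (map tfact ts)) \<and>
     (\<forall>m::nat. poly (prod_list (map Q ts)) (of_nat m) = (of_nat (prod_list (map (\<lambda>t. F t m) ts)) :: rat))"
  using assms
proof (induction ts)
  case Nil
  then show ?case by simp
next
  case (Cons a ts)
  let ?P = "prod_list (map Q ts)"
  have IH: "degree ?P = sum_list (map nverts ts)" "lead_coeff ?P = 1 / of_nat (prod_list (map tfact ts))"
    "\<forall>m::nat. poly ?P (of_nat m) = (of_nat (prod_list (map (\<lambda>t. F t m) ts)) :: rat)"
  proof -
    have pr: "\<forall>t\<in>set ts. degree (Q t) = nverts t \<and> lead_coeff (Q t) = 1 / of_nat (tfact t) \<and>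
     (\<forall>m::nat. poly (Q t) (of_nat m) = of_nat (F t m))" using Cons.prems by (meson list.set_intros(2))
    note h = Cons.IH[OF pr]
    show "degree ?P = sum_list (map nverts ts)" using h by blast
    show "lead_coeff ?P = 1 / of_nat (prod_list (map tfact ts))" using h by blast
    show "\<forall>m::nat. poly ?P (of_nat m) = (of_nat (prod_list (map (\<lambda>t. F t m) ts)) :: rat)" using h by blast
  qed
  have A: "degree (Q a) = nverts a" "lead_coeff (Q a) = 1 / of_nat (tfact a)"
    "\<forall>m::nat. poly (Q a) (of_nat m) = of_nat (F a m)" using Cons.prems by (meson list.set_intros(1))+
  have pp: "0 < prod_list (map tfact ts)" using prod_list_pos[of ts tfact] tfact_pos by auto
  have nz1: "Q a \<noteq> 0" using A(2) tfact_pos[of a] by (auto simp del: of_nat_0_less_iff)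
  have nz2: "?P \<noteq> 0" using IH(2) pp by (auto simp del: of_nat_0_less_iff)
  have "degree (Q a * ?P) = nverts a + sum_list (map nverts ts)"
    using degree_mult_eq[OF nz1 nz2] A IH by simp
  moreover have "lead_coeff (Q a * ?P) = 1 / of_nat (tfact a * prod_list (map tfact ts))"
    using A IH by (simp add: lead_coeff_mult)
  moreover have "\<forall>m::nat. poly (Q a * ?P) (of_nat m) = (of_nat (F a m * prod_list (map (\<lambda>t. F t m) ts)) :: rat)"
    using A IH by simp
  ultimately show ?case by simp
qed

lemma main_poly: "\<exists>p :: rat poly. degree p = nverts X \<and> lead_coeff p = 1 / of_nat (tfact X) \<and>
    (\<forall>m::nat. poly p (of_nat m) = of_nat (F X m))"
proof (induction X)
  case (Nd ts)
  show ?case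
  proof (cases "ts = []")
    case True
    then show ?thesis by (intro exI[of _ 1]) simp
  next
    case ne: False
    from Nd.IH have "\<forall>t\<in>set ts. \<exists>p :: rat poly. degree p = nverts t \<and> lead_coeff p = 1 / of_nat (tfact t) \<and>
      (\<forall>m::nat. poly p (of_nat m) = of_nat (F t m))" by blast
    then obtain Q where Q: "\<forall>t\<in>set ts. degree (Q t) = nverts t \<and> lead_coeff (Q t) = 1 / of_nat (tfact t) \<and>
      (\<forall>m::nat. poly (Q t) (of_nat m) = (of_nat (F t m) :: rat))" by (metis bchoice)
    define q where "q = prod_list (map Q ts)"
    have q: "degree q = sum_list (map nverts ts)" "lead_coeff q = 1 / of_nat (prod_list (map tfact ts))"
      "\<forall>m::nat. poly q (of_nat m) = (of_nat (prod_list (map (\<lambda>t. F t m) ts)) :: rat)"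
      using prodpoly[OF Q] unfolding q_def by auto
    have pp: "0 < prod_list (map tfact ts)" using prod_list_pos[of ts tfact] tfact_pos by auto
    obtain r :: "rat poly" where r: "degree r \<le> degree q + 1"
      "coeff r (degree q + 1) = lead_coeff q / of_nat (degree q + 1)"
      "\<forall>m::nat. poly r (of_nat m) = (\<Sum>j\<le>m. poly q (of_nat j))"
      using antisum[of q] by blast
    have cnz: "coeff r (degree q + 1) \<noteq> 0" using r(2) q(2) pp by (simp del: of_nat_0_less_iff)
    then have "degree q + 1 \<le> degree r" by (rule le_degree)
    then have dr: "degree r = degree q + 1" using r(1) by simp
    have nv: "nverts (Nd ts) = degree q + 1" using ne q(1) by simp
    have tf: "tfact (Nd ts) = nverts (Nd ts) * prod_list (map tfact ts)" using ne by simp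
    show ?thesis
    proof (intro exI[of _ r] conjI allI)
      show "degree r = nverts (Nd ts)" using dr nv by simp
      have tf': "(of_nat (tfact (Nd ts)) :: rat) = of_nat (degree q + 1) * of_nat (prod_list (map tfact ts))"
        using tf nv by (simp only: of_nat_mult)
      show "lead_coeff r = 1 / of_nat (tfact (Nd ts))"
        unfolding tf' using dr r(2) q(2) by (simp add: divide_divide_eq_left mult.commute)
      fix m :: nat
      have "poly r (of_nat m) = (\<Sum>j\<le>m. (of_nat (prod_list (map (\<lambda>t. F t j) ts)) :: rat))"
        using r(3) q(3) by simp
      also have "\<dots> = of_nat (F (Nd ts) m)" using ne by simp
      finally show "poly r (of_nat m) = of_nat (F (Nd ts) m)" .
    qed
  qed
qed

theorem mainTheorem6:
  fixes S :: ptree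
  shows "\<exists>p :: rat poly. degree p = nverts S \<and>
           lead_coeff p = 1 / of_nat (tfact S) \<and>
           (\<forall>n::nat. poly p (of_nat n) = of_nat (sh S (lin n)))"
  using main_poly[of S] by (simp add: sh_F)


end
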